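(* Let $\mathcal C$ be a pointed category with finite coproducts and $E\in\mathcal C$ such that every object of $\mathcal C$ is isomorphic to a finite coproduct $E^{\vee k}$ of copies of $E$. Let $F,G\colon\mathcal C\to Ab$ be reduced functors which are polynomial of degree $\le n$, and let $\phi\colon F\to G$ be a natural transformation. Then the following are equivalent: (1) $\phi$ is a natural isomorphism; (2) $\phi_{E^{\vee k}}$ is an isomorphism for all $k\le n$; (3) $\phi_{E^{\vee n}}$ is an isomorphism; (4) $cr_k(\phi)_{E,\dots,E}$ is an isomorphism for all $1\le k\le n$.
   Context: - For a functor $F\colon\mathcal C\to Ab$: $cr_1F(X)=\ker(F(X)\to F(0))$ and $cr_2F(X,Y)=\ker\big((F(r_1),F(r_2))\colon F(X\vee Y)\to F(X)\oplus F(Y)\big)$, where $r_k$ are the coproduct retractions. - For $n\ge3$, $cr_nF(X_1,\dots,X_n)=cr_2\big(cr_{n-1}F(-,X_3,\dots,X_n)\big)(X_1,X_2)$. - $F$ is polynomial of degree $\le n$ if $cr_{n+1}F=0$. - $F$ is reduced if $F(0)=0$. - $cr_k(\phi)$ denotes the induced natural transformation $cr_kF\to cr_kG$. *)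

theory Defs
  imports "HOL-Algebra.Algebra"
begin

record ('o, 'm) pcat =
  cOb  :: "'o set"
  cAr  :: "'m set"
  cDom :: "'m \<Rightarrow> 'o"
  cCod :: "'m \<Rightarrow> 'o"
  cCmp :: "'m \<Rightarrow> 'm \<Rightarrow> 'm"   (* cCmp g f = g \<circ> f *)
  cId :: "'o \<Rightarrow> 'm"
  cZero :: "'o"
  cCop :: "'o \<Rightarrow> 'o \<Rightarrow> 'o"
  cIn1 :: "'o \<Rightarrow> 'o \<Rightarrow> 'm"
  cIn2 :: "'o \<Rightarrow> 'o \<Rightarrow> 'm"

definition HomC :: "('o,'m) pcat \<Rightarrow> 'o \<Rightarrow> 'o \<Rightarrow> 'm set" where
  "HomC C P Y = {f \<in> cAr C. cDom C f = P \<and> cCod C f = Y}"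

definition category :: "('o,'m) pcat \<Rightarrow> bool" where
  "category C \<longleftrightarrow>
     (\<forall>f\<in>cAr C. cDom C f \<in> cOb C \<and> cCod C f \<in> cOb C) \<and>
     (\<forall>P\<in>cOb C. cId C P \<in> HomC C P P) \<and>
     (\<forall>f\<in>cAr C. \<forall>g\<in>cAr C. cCod C f = cDom C g \<longrightarrow> cCmp C g f \<in> HomC C (cDom C f) (cCod C g)) \<and>
     (\<forall>f\<in>cAr C. cCmp C f (cId C (cDom C f)) = f \<and> cCmp C (cId C (cCod C f)) f = f) \<and>
     (\<forall>f\<in>cAr C. \<forall>g\<in>cAr C. \<forall>h\<in>cAr C. cCod C f = cDom C g \<longrightarrow> cCod C g = cDom C h \<longrightarrow>
         cCmp C h (cCmp C g f) = cCmp C (cCmp C h g) f)"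

text \<open>A pointed category with finite coproducts: a zero object (initial and terminal)
  together with binary coproducts (finite coproducts = initial object + binary coproducts).\<close>
definition pointed_cat_fin_coprod :: "('o,'m) pcat \<Rightarrow> bool" where
  "pointed_cat_fin_coprod C \<longleftrightarrow> category C \<and>
     cZero C \<in> cOb C \<and>
     (\<forall>P\<in>cOb C. (\<exists>!u. u \<in> HomC C (cZero C) P) \<and> (\<exists>!u. u \<in> HomC C P (cZero C))) \<and>
     (\<forall>P\<in>cOb C. \<forall>Y\<in>cOb C. cCop C P Y \<in> cOb C \<and>
        cIn1 C P Y \<in> HomC C P (cCop C P Y) \<and> cIn2 C P Y \<in> HomC C Y (cCop C P Y) \<and>
        (\<forall>Z\<in>cOb C. \<forall>h\<in>HomC C P Z. \<forall>k\<in>HomC C Y Z.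
           \<exists>!u. u \<in> HomC C (cCop C P Y) Z \<and> cCmp C u (cIn1 C P Y) = h \<and> cCmp C u (cIn2 C P Y) = k))"

definition toZ :: "('o,'m) pcat \<Rightarrow> 'o \<Rightarrow> 'm" where
  "toZ C P = (THE u. u \<in> HomC C P (cZero C))"

definition fromZ :: "('o,'m) pcat \<Rightarrow> 'o \<Rightarrow> 'm" where
  "fromZ C P = (THE u. u \<in> HomC C (cZero C) P)"

definition zmor :: "('o,'m) pcat \<Rightarrow> 'o \<Rightarrow> 'o \<Rightarrow> 'm" where
  "zmor C P Y = cCmp C (fromZ C Y) (toZ C P)"

definition copair :: "('o,'m) pcat \<Rightarrow> 'o \<Rightarrow> 'o \<Rightarrow> 'm \<Rightarrow> 'm \<Rightarrow> 'm" where
  "copair C P Y h k = (THE u. u \<in> HomC C (cCop C P Y) (cCod C h) \<and>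
       cCmp C u (cIn1 C P Y) = h \<and> cCmp C u (cIn2 C P Y) = k)"

definition retr1 :: "('o,'m) pcat \<Rightarrow> 'o \<Rightarrow> 'o \<Rightarrow> 'm" where
  "retr1 C P Y = copair C P Y (cId C P) (zmor C Y P)"

definition retr2 :: "('o,'m) pcat \<Rightarrow> 'o \<Rightarrow> 'o \<Rightarrow> 'm" where
  "retr2 C P Y = copair C P Y (zmor C P Y) (cId C Y)"

definition copmor :: "('o,'m) pcat \<Rightarrow> 'm \<Rightarrow> 'm \<Rightarrow> 'm" where
  "copmor C f g = copair C (cDom C f) (cDom C g)
      (cCmp C (cIn1 C (cCod C f) (cCod C g)) f) (cCmp C (cIn2 C (cCod C f) (cCod C g)) g)"

primrec copow :: "('o,'m) pcat \<Rightarrow> 'o \<Rightarrow> nat \<Rightarrow> 'o" where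
  "copow C E 0 = cZero C"
| "copow C E (Suc k) = cCop C (copow C E k) E"

definition is_iso_obj :: "('o,'m) pcat \<Rightarrow> 'o \<Rightarrow> 'o \<Rightarrow> bool" where
  "is_iso_obj C P Y \<longleftrightarrow> (\<exists>f g. f \<in> HomC C P Y \<and> g \<in> HomC C Y P \<and>
       cCmp C g f = cId C P \<and> cCmp C f g = cId C Y)"

definition ab_functor :: "('o,'m) pcat \<Rightarrow> ('o \<Rightarrow> 'g monoid) \<Rightarrow> ('m \<Rightarrow> 'g \<Rightarrow> 'g) \<Rightarrow> bool" where
  "ab_functor C Fo Fm \<longleftrightarrow>
     (\<forall>P\<in>cOb C. comm_group (Fo P)) \<and>
     (\<forall>f\<in>cAr C. Fm f \<in> hom (Fo (cDom C f)) (Fo (cCod C f))) \<and>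
     (\<forall>P\<in>cOb C. \<forall>x\<in>carrier (Fo P). Fm (cId C P) x = x) \<and>
     (\<forall>f\<in>cAr C. \<forall>g\<in>cAr C. cCod C f = cDom C g \<longrightarrow>
        (\<forall>x\<in>carrier (Fo (cDom C f)). Fm (cCmp C g f) x = Fm g (Fm f x)))"

definition reduced :: "('o,'m) pcat \<Rightarrow> ('o \<Rightarrow> 'g monoid) \<Rightarrow> bool" where
  "reduced C Fo \<longleftrightarrow> carrier (Fo (cZero C)) = {\<one>\<^bsub>Fo (cZero C)\<^esub>}"

definition nat_trans :: "('o,'m) pcat \<Rightarrow> ('o \<Rightarrow> 'g monoid) \<Rightarrow> ('m \<Rightarrow> 'g \<Rightarrow> 'g)
     \<Rightarrow> ('o \<Rightarrow> 'h monoid) \<Rightarrow> ('m \<Rightarrow> 'h \<Rightarrow> 'h) \<Rightarrow> ('o \<Rightarrow> 'g \<Rightarrow> 'h) \<Rightarrow> bool" where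
  "nat_trans C Fo Fm Go Gm phi \<longleftrightarrow>
     (\<forall>P\<in>cOb C. phi P \<in> hom (Fo P) (Go P)) \<and>
     (\<forall>f\<in>cAr C. \<forall>x\<in>carrier (Fo (cDom C f)). phi (cCod C f) (Fm f x) = Gm f (phi (cDom C f) x))"

text \<open>A functor of several variables is represented by an object part on lists of objects
  and a morphism part on lists of morphisms.\<close>
type_synonym ('o,'m,'g) mfun = "('o list \<Rightarrow> 'g monoid) \<times> ('m list \<Rightarrow> 'g \<Rightarrow> 'g)"

definition lift1 :: "('o \<Rightarrow> 'g monoid) \<Rightarrow> ('m \<Rightarrow> 'g \<Rightarrow> 'g) \<Rightarrow> ('o,'m,'g) mfun" where
  "lift1 Fo Fm = ((\<lambda>Ps. Fo (hd Ps)), (\<lambda>fs. Fm (hd fs)))"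

definition cr1 :: "('o,'m) pcat \<Rightarrow> ('o \<Rightarrow> 'g monoid) \<Rightarrow> ('m \<Rightarrow> 'g \<Rightarrow> 'g) \<Rightarrow> ('o,'m,'g) mfun" where
  "cr1 C Fo Fm = ((\<lambda>Ps. (Fo (hd Ps))\<lparr>carrier :=
        {x \<in> carrier (Fo (hd Ps)). Fm (toZ C (hd Ps)) x = \<one>\<^bsub>Fo (cZero C)\<^esub>}\<rparr>),
      (\<lambda>fs. Fm (hd fs)))"

text \<open>cr_2 in the first two variables of a multi-variable functor H:
  cr_2 H(X_1,X_2,Ys) = ker(H(X_1 \<or> X_2,Ys) \<rightarrow> H(X_1,Ys) \<oplus> H(X_2,Ys)), maps H(r_i, id, ..., id).\<close>
definition cr2first :: "('o,'m) pcat \<Rightarrow> ('o,'m,'g) mfun \<Rightarrow> ('o,'m,'g) mfun" where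
  "cr2first C H = (
     (\<lambda>Ps. case Ps of
        P1 # P2 # Ys \<Rightarrow> (fst H (cCop C P1 P2 # Ys))\<lparr>carrier :=
            {x \<in> carrier (fst H (cCop C P1 P2 # Ys)).
               snd H (retr1 C P1 P2 # map (cId C) Ys) x = \<one>\<^bsub>fst H (P1 # Ys)\<^esub> \<and>
               snd H (retr2 C P1 P2 # map (cId C) Ys) x = \<one>\<^bsub>fst H (P2 # Ys)\<^esub>}\<rparr>
      | _ \<Rightarrow> fst H Ps),
     (\<lambda>fs. case fs of
        f1 # f2 # gs \<Rightarrow> snd H (copmor C f1 f2 # gs)
      | _ \<Rightarrow> snd H fs))"

text \<open>cr_n F as an n-variable functor (n \<ge> 1); cr_n = cr_2(cr_{n-1}(-,X_3,...,X_n)) for n \<ge> 3.\<close>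
fun cr :: "('o,'m) pcat \<Rightarrow> ('o \<Rightarrow> 'g monoid) \<Rightarrow> ('m \<Rightarrow> 'g \<Rightarrow> 'g) \<Rightarrow> nat \<Rightarrow> ('o,'m,'g) mfun" where
  "cr C Fo Fm 0 = lift1 Fo Fm"
| "cr C Fo Fm (Suc 0) = cr1 C Fo Fm"
| "cr C Fo Fm (Suc (Suc 0)) = cr2first C (lift1 Fo Fm)"
| "cr C Fo Fm (Suc (Suc (Suc n))) = cr2first C (cr C Fo Fm (Suc (Suc n)))"

text \<open>The object of C in whose F-value cr_n F(X_1,...,X_n) sits as a subgroup:
  ((X_1 \<or> X_2) \<or> X_3) \<or> ... \<or> X_n.\<close>
definition amb :: "('o,'m) pcat \<Rightarrow> 'o list \<Rightarrow> 'o" where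
  "amb C Ps = foldl (cCop C) (hd Ps) (tl Ps)"

definition polynomial_deg_le :: "('o,'m) pcat \<Rightarrow> ('o \<Rightarrow> 'g monoid) \<Rightarrow> ('m \<Rightarrow> 'g \<Rightarrow> 'g) \<Rightarrow> nat \<Rightarrow> bool" where
  "polynomial_deg_le C Fo Fm n \<longleftrightarrow>
     (\<forall>Ps. length Ps = Suc n \<and> set Ps \<subseteq> cOb C \<longrightarrow>
        carrier (fst (cr C Fo Fm (Suc n)) Ps) = {\<one>\<^bsub>fst (cr C Fo Fm (Suc n)) Ps\<^esub>})"

text \<open>cr_k(\<phi>)_{Ps} : cr_k F(Ps) \<rightarrow> cr_k G(Ps) is the restriction of \<phi> at the ambient object;
  it is an isomorphism of abelian groups.\<close>
definition cr_nat_iso :: "('o,'m) pcat \<Rightarrow> ('o \<Rightarrow> 'g monoid) \<Rightarrow> ('m \<Rightarrow> 'g \<Rightarrow> 'g)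
     \<Rightarrow> ('o \<Rightarrow> 'h monoid) \<Rightarrow> ('m \<Rightarrow> 'h \<Rightarrow> 'h) \<Rightarrow> ('o \<Rightarrow> 'g \<Rightarrow> 'h) \<Rightarrow> nat \<Rightarrow> 'o list \<Rightarrow> bool" where
  "cr_nat_iso C Fo Fm Go Gm phi k Ps \<longleftrightarrow>
     phi (amb C Ps) \<in> iso (fst (cr C Fo Fm k) Ps) (fst (cr C Go Gm k) Ps)"

end

theory Submission
  imports Defs
begin


lemma comm_sub:
  assumes "comm_group G" "subgroup S G" shows "comm_group (G\<lparr>carrier := S\<rparr>)"
proof -
  interpret comm_group G by fact
  have g: "group (G\<lparr>carrier := S\<rparr>)" using assms(2) subgroup.subgroup_is_group by (metis is_group)
  show ?thesis
    apply (rule group.group_comm_groupI[OF g])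
    using assms(2) by (simp add: m_comm subgroup.mem_carrier)
qed

lemma ghom: "h \<in> hom G H \<Longrightarrow> group G \<Longrightarrow> group H \<Longrightarrow> group_hom G H h"
  by (simp add: group_hom_def group_hom_axioms_def)

lemma ker2_comm:
  assumes G: "comm_group G" and "group H1" "group H2" "h1 \<in> hom G H1" "h2 \<in> hom G H2"
  shows "comm_group (G\<lparr>carrier := {x\<in>carrier G. h1 x = \<one>\<^bsub>H1\<^esub> \<and> h2 x = \<one>\<^bsub>H2\<^esub>}\<rparr>)"
proof -
  interpret comm_group G by fact
  interpret a: group_hom G H1 h1 using assms ghom is_group by blast
  interpret b: group_hom G H2 h2 using assms ghom is_group by blast
  show ?thesis
    apply (rule comm_sub[OF G])
    apply (rule subgroupI)
    apply auto
    apply (rule exI[where x="\<one>\<^bsub>G\<^esub>"])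
    by auto
qed




locale pc = fixes C :: "('o,'m) pcat" assumes PC: "pointed_cat_fin_coprod C"
begin

lemma cat: "category C" using PC unfolding pointed_cat_fin_coprod_def by blast

lemma Hom_iff: "f \<in> HomC C P Y \<longleftrightarrow> f \<in> cAr C \<and> cDom C f = P \<and> cCod C f = Y"
  by (simp add: HomC_def)

lemma c1: "f\<in>cAr C \<Longrightarrow> cDom C f \<in> cOb C \<and> cCod C f \<in> cOb C"
  using cat unfolding category_def by blast
lemma c2: "P\<in>cOb C \<Longrightarrow> cId C P \<in> HomC C P P"
  using cat unfolding category_def by blast
lemma c3: "f\<in>cAr C \<Longrightarrow> g\<in>cAr C \<Longrightarrow> cCod C f = cDom C g \<Longrightarrow> cCmp C g f \<in> HomC C (cDom C f) (cCod C g)"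
  using cat unfolding category_def by blast
lemma c4: "f\<in>cAr C \<Longrightarrow> cCmp C f (cId C (cDom C f)) = f \<and> cCmp C (cId C (cCod C f)) f = f"
  using cat unfolding category_def by blast
lemma c5: "f\<in>cAr C \<Longrightarrow> g\<in>cAr C \<Longrightarrow> h\<in>cAr C \<Longrightarrow> cCod C f = cDom C g \<Longrightarrow> cCod C g = cDom C h \<Longrightarrow>
         cCmp C h (cCmp C g f) = cCmp C (cCmp C h g) f"
  using cat unfolding category_def by blast

lemma Hom_ob: "f \<in> HomC C P Y \<Longrightarrow> P \<in> cOb C \<and> Y \<in> cOb C"
  using c1 unfolding Hom_iff by blast

lemma comp_Hom: "f \<in> HomC C P Q \<Longrightarrow> g \<in> HomC C Q R \<Longrightarrow> cCmp C g f \<in> HomC C P R"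
  using c3 unfolding Hom_iff by force

lemma id_Hom: "P \<in> cOb C \<Longrightarrow> cId C P \<in> HomC C P P"
  using c2 by blast

lemma id_l: "f \<in> HomC C P Q \<Longrightarrow> cCmp C (cId C Q) f = f"
  using c4 unfolding Hom_iff by force

lemma id_r: "f \<in> HomC C P Q \<Longrightarrow> cCmp C f (cId C P) = f"
  using c4 unfolding Hom_iff by force

lemma assoc: "f \<in> HomC C P Q \<Longrightarrow> g \<in> HomC C Q R \<Longrightarrow> h \<in> HomC C R S \<Longrightarrow>
   cCmp C h (cCmp C g f) = cCmp C (cCmp C h g) f"
  using c5 unfolding Hom_iff by force

lemma PCz: "cZero C \<in> cOb C"
  using PC[unfolded pointed_cat_fin_coprod_def] by (elim conjE)
lemma PCb: "\<forall>P\<in>cOb C. (\<exists>!u. u \<in> HomC C (cZero C) P) \<and> (\<exists>!u. u \<in> HomC C P (cZero C))"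
  using PC[unfolded pointed_cat_fin_coprod_def] by (elim conjE)
lemma PCc: "\<forall>P\<in>cOb C. \<forall>Y\<in>cOb C. cCop C P Y \<in> cOb C \<and>
        cIn1 C P Y \<in> HomC C P (cCop C P Y) \<and> cIn2 C P Y \<in> HomC C Y (cCop C P Y) \<and>
        (\<forall>Z\<in>cOb C. \<forall>h\<in>HomC C P Z. \<forall>k\<in>HomC C Y Z.
           \<exists>!u. u \<in> HomC C (cCop C P Y) Z \<and> cCmp C u (cIn1 C P Y) = h \<and> cCmp C u (cIn2 C P Y) = k)"
  using PC[unfolded pointed_cat_fin_coprod_def] by (elim conjE)

lemma PCa: "cZero C \<in> cOb C"
  "P\<in>cOb C \<Longrightarrow> (\<exists>!u. u \<in> HomC C (cZero C) P) \<and> (\<exists>!u. u \<in> HomC C P (cZero C))"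
  "P\<in>cOb C \<Longrightarrow> Y\<in>cOb C \<Longrightarrow> cCop C P Y \<in> cOb C \<and>
        cIn1 C P Y \<in> HomC C P (cCop C P Y) \<and> cIn2 C P Y \<in> HomC C Y (cCop C P Y) \<and>
        (\<forall>Z\<in>cOb C. \<forall>h\<in>HomC C P Z. \<forall>k\<in>HomC C Y Z.
           \<exists>!u. u \<in> HomC C (cCop C P Y) Z \<and> cCmp C u (cIn1 C P Y) = h \<and> cCmp C u (cIn2 C P Y) = k)"
    apply (rule PCz)
   apply (erule bspec[OF PCb])
  by (rule bspec[OF bspec[OF PCc]])

lemma Z_ob: "cZero C \<in> cOb C" by (rule PCz)

lemma toZ: assumes "P \<in> cOb C" shows "toZ C P \<in> HomC C P (cZero C)"
proof -
  have "\<exists>!u. u \<in> HomC C P (cZero C)" using PCa(2)[OF assms] by (rule conjunct2)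
  then show ?thesis unfolding toZ_def by (rule theI')
qed

lemma fromZ: assumes "P \<in> cOb C" shows "fromZ C P \<in> HomC C (cZero C) P"
proof -
  have "\<exists>!u. u \<in> HomC C (cZero C) P" using PCa(2)[OF assms] by (rule conjunct1)
  then show ?thesis unfolding fromZ_def by (rule theI')
qed

lemma toZ_uniq: assumes "u \<in> HomC C P (cZero C)" shows "u = toZ C P"
proof -
  have P: "P \<in> cOb C" using Hom_ob assms by blast
  have "\<exists>!u. u \<in> HomC C P (cZero C)" using PCa(2)[OF P] by (rule conjunct2)
  then show ?thesis unfolding toZ_def using assms by (simp add: the1_equality)
qed

lemma fromZ_uniq: assumes "u \<in> HomC C (cZero C) P" shows "u = fromZ C P"
proof -
  have P: "P \<in> cOb C" using Hom_ob assms by blast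
  have "\<exists>!u. u \<in> HomC C (cZero C) P" using PCa(2)[OF P] by (rule conjunct1)
  then show ?thesis unfolding fromZ_def using assms by (simp add: the1_equality)
qed

lemma cop_ob: "P \<in> cOb C \<Longrightarrow> Y \<in> cOb C \<Longrightarrow> cCop C P Y \<in> cOb C"
  using PCa(3) by simp

lemma in1: "P \<in> cOb C \<Longrightarrow> Y \<in> cOb C \<Longrightarrow> cIn1 C P Y \<in> HomC C P (cCop C P Y)"
  using PCa(3) by simp

lemma in2: "P \<in> cOb C \<Longrightarrow> Y \<in> cOb C \<Longrightarrow> cIn2 C P Y \<in> HomC C Y (cCop C P Y)"
  using PCa(3) by simp

lemma cop_univ: assumes h: "h \<in> HomC C P Z" and k: "k \<in> HomC C Y Z" shows
   "\<exists>!u. u \<in> HomC C (cCop C P Y) Z \<and> cCmp C u (cIn1 C P Y) = h \<and> cCmp C u (cIn2 C P Y) = k"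
proof -
  have o: "P \<in> cOb C" "Z \<in> cOb C" "Y \<in> cOb C" using Hom_ob h k by blast+
  have "\<forall>Z\<in>cOb C. \<forall>h\<in>HomC C P Z. \<forall>k\<in>HomC C Y Z.
           \<exists>!u. u \<in> HomC C (cCop C P Y) Z \<and> cCmp C u (cIn1 C P Y) = h \<and> cCmp C u (cIn2 C P Y) = k"
    using PCa(3)[OF o(1) o(3)] by simp
  then show ?thesis using o h k by simp
qed

lemma copair: assumes "h \<in> HomC C P Z" "k \<in> HomC C Y Z"
  shows "copair C P Y h k \<in> HomC C (cCop C P Y) Z \<and> cCmp C (copair C P Y h k) (cIn1 C P Y) = h
     \<and> cCmp C (copair C P Y h k) (cIn2 C P Y) = k"
proof -
  have "cCod C h = Z" using assms Hom_iff by blast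
  then show ?thesis unfolding copair_def using theI'[OF cop_univ[OF assms]] by simp
qed

lemma cop_ext: assumes "P \<in> cOb C" "Y \<in> cOb C" "u \<in> HomC C (cCop C P Y) Z" "v \<in> HomC C (cCop C P Y) Z"
  "cCmp C u (cIn1 C P Y) = cCmp C v (cIn1 C P Y)" "cCmp C u (cIn2 C P Y) = cCmp C v (cIn2 C P Y)"
  shows "u = v"
proof -
  have "cCmp C u (cIn1 C P Y) \<in> HomC C P Z" "cCmp C u (cIn2 C P Y) \<in> HomC C Y Z"
    using assms comp_Hom in1 in2 by blast+
  note ex = cop_univ[OF this]
  have "(THE y. y \<in> HomC C (cCop C P Y) Z \<and> cCmp C y (cIn1 C P Y) = cCmp C u (cIn1 C P Y) \<and>
        cCmp C y (cIn2 C P Y) = cCmp C u (cIn2 C P Y)) = u" by (rule the1_equality[OF ex]) (simp add: assms)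
  moreover have "(THE y. y \<in> HomC C (cCop C P Y) Z \<and> cCmp C y (cIn1 C P Y) = cCmp C u (cIn1 C P Y) \<and>
        cCmp C y (cIn2 C P Y) = cCmp C u (cIn2 C P Y)) = v" by (rule the1_equality[OF ex]) (simp add: assms)
  ultimately show ?thesis by simp
qed

end


context pc begin

lemma zmor_Hom: "P \<in> cOb C \<Longrightarrow> Y \<in> cOb C \<Longrightarrow> zmor C P Y \<in> HomC C P Y"
  unfolding zmor_def by (rule comp_Hom[OF toZ fromZ])

lemma zmor_l: assumes f: "f \<in> HomC C Q R" and P: "P \<in> cOb C"
  shows "cCmp C f (zmor C P Q) = zmor C P R"
proof -
  have Q: "Q \<in> cOb C" "R \<in> cOb C" using Hom_ob f by blast+
  have "cCmp C f (zmor C P Q) = cCmp C (cCmp C f (fromZ C Q)) (toZ C P)"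
    unfolding zmor_def by (rule assoc[OF toZ[OF P] fromZ[OF Q(1)] f])
  also have "cCmp C f (fromZ C Q) = fromZ C R"
    by (rule fromZ_uniq, rule comp_Hom[OF fromZ[OF Q(1)] f])
  finally show ?thesis unfolding zmor_def .
qed

lemma zmor_r: assumes f: "f \<in> HomC C P Q" and R: "R \<in> cOb C"
  shows "cCmp C (zmor C Q R) f = zmor C P R"
proof -
  have Q: "P \<in> cOb C" "Q \<in> cOb C" using Hom_ob f by blast+
  have "cCmp C (zmor C Q R) f = cCmp C (fromZ C R) (cCmp C (toZ C Q) f)"
    unfolding zmor_def by (rule assoc[OF f toZ[OF Q(2)] fromZ[OF R], symmetric])
  also have "cCmp C (toZ C Q) f = toZ C P"
    by (rule toZ_uniq, rule comp_Hom[OF f toZ[OF Q(2)]])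
  finally show ?thesis unfolding zmor_def .
qed

lemma r1: assumes "P \<in> cOb C" "Y \<in> cOb C"
  shows "retr1 C P Y \<in> HomC C (cCop C P Y) P" "cCmp C (retr1 C P Y) (cIn1 C P Y) = cId C P"
    "cCmp C (retr1 C P Y) (cIn2 C P Y) = zmor C Y P"
  using copair[OF id_Hom[OF assms(1)] zmor_Hom[OF assms(2) assms(1)]] unfolding retr1_def by auto

lemma r2: assumes "P \<in> cOb C" "Y \<in> cOb C"
  shows "retr2 C P Y \<in> HomC C (cCop C P Y) Y" "cCmp C (retr2 C P Y) (cIn1 C P Y) = zmor C P Y"
    "cCmp C (retr2 C P Y) (cIn2 C P Y) = cId C Y"
  using copair[OF zmor_Hom[OF assms(1) assms(2)] id_Hom[OF assms(2)]] unfolding retr2_def by auto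

lemma copmor: assumes f: "f \<in> HomC C A A'" and g: "g \<in> HomC C B B'"
  shows "copmor C f g \<in> HomC C (cCop C A B) (cCop C A' B')"
    "cCmp C (copmor C f g) (cIn1 C A B) = cCmp C (cIn1 C A' B') f"
    "cCmp C (copmor C f g) (cIn2 C A B) = cCmp C (cIn2 C A' B') g"
proof -
  have o: "A \<in> cOb C" "A' \<in> cOb C" "B \<in> cOb C" "B' \<in> cOb C" using Hom_ob f g by blast+
  have d: "cDom C f = A" "cCod C f = A'" "cDom C g = B" "cCod C g = B'" using f g Hom_iff by blast+
  have h: "cCmp C (cIn1 C A' B') f \<in> HomC C A (cCop C A' B')" "cCmp C (cIn2 C A' B') g \<in> HomC C B (cCop C A' B')"
    using comp_Hom f g in1 in2 o by blast+
  show "copmor C f g \<in> HomC C (cCop C A B) (cCop C A' B')"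
    "cCmp C (copmor C f g) (cIn1 C A B) = cCmp C (cIn1 C A' B') f"
    "cCmp C (copmor C f g) (cIn2 C A B) = cCmp C (cIn2 C A' B') g"
    using copair[OF h] unfolding copmor_def d by auto
qed

lemma copmor_comp: assumes f: "f \<in> HomC C A A'" and f': "f' \<in> HomC C A' A''"
  and g: "g \<in> HomC C B B'" and g': "g' \<in> HomC C B' B''"
  shows "copmor C (cCmp C f' f) (cCmp C g' g) = cCmp C (copmor C f' g') (copmor C f g)"
proof -
  have o: "A \<in> cOb C" "A' \<in> cOb C" "B \<in> cOb C" "B' \<in> cOb C" "A'' \<in> cOb C" "B'' \<in> cOb C"
    using Hom_ob f g f' g' by blast+
  note m = copmor[OF f g] and m' = copmor[OF f' g']
  note ff = comp_Hom[OF f f'] and gg = comp_Hom[OF g g']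
  note mm = copmor[OF ff gg]
  show ?thesis
  proof (rule cop_ext[OF o(1) o(3) mm(1) comp_Hom[OF m(1) m'(1)]])
    have "cCmp C (cCmp C (copmor C f' g') (copmor C f g)) (cIn1 C A B)
        = cCmp C (copmor C f' g') (cCmp C (copmor C f g) (cIn1 C A B))"
      by (rule assoc[OF in1[OF o(1) o(3)] m(1) m'(1), symmetric])
    also have "\<dots> = cCmp C (copmor C f' g') (cCmp C (cIn1 C A' B') f)" using m(2) by simp
    also have "\<dots> = cCmp C (cCmp C (copmor C f' g') (cIn1 C A' B')) f"
      by (rule assoc[OF f in1[OF o(2) o(4)] m'(1)])
    also have "\<dots> = cCmp C (cCmp C (cIn1 C A'' B'') f') f" using m'(2) by simp
    also have "\<dots> = cCmp C (cIn1 C A'' B'') (cCmp C f' f)"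
      by (rule assoc[OF f f' in1[OF o(5) o(6)], symmetric])
    finally show "cCmp C (copmor C (cCmp C f' f) (cCmp C g' g)) (cIn1 C A B) =
      cCmp C (cCmp C (copmor C f' g') (copmor C f g)) (cIn1 C A B)" using mm(2) by simp
  next
    have "cCmp C (cCmp C (copmor C f' g') (copmor C f g)) (cIn2 C A B)
        = cCmp C (copmor C f' g') (cCmp C (copmor C f g) (cIn2 C A B))"
      by (rule assoc[OF in2[OF o(1) o(3)] m(1) m'(1), symmetric])
    also have "\<dots> = cCmp C (copmor C f' g') (cCmp C (cIn2 C A' B') g)" using m(3) by simp
    also have "\<dots> = cCmp C (cCmp C (copmor C f' g') (cIn2 C A' B')) g"
      by (rule assoc[OF g in2[OF o(2) o(4)] m'(1)])
    also have "\<dots> = cCmp C (cCmp C (cIn2 C A'' B'') g') g" using m'(3) by simp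
    also have "\<dots> = cCmp C (cIn2 C A'' B'') (cCmp C g' g)"
      by (rule assoc[OF g g' in2[OF o(5) o(6)], symmetric])
    finally show "cCmp C (copmor C (cCmp C f' f) (cCmp C g' g)) (cIn2 C A B) =
      cCmp C (cCmp C (copmor C f' g') (copmor C f g)) (cIn2 C A B)" using mm(3) by simp
  qed
qed

lemma copmor_id: assumes "A \<in> cOb C" "B \<in> cOb C"
  shows "copmor C (cId C A) (cId C B) = cId C (cCop C A B)"
proof -
  note m = copmor[OF id_Hom[OF assms(1)] id_Hom[OF assms(2)]]
  have c: "cCop C A B \<in> cOb C" using cop_ob assms by blast
  show ?thesis
    apply (rule cop_ext[OF assms m(1) id_Hom[OF c]])
    using m id_l id_r in1 in2 assms by metis+
qed

lemma r1_nat: assumes f: "f \<in> HomC C A A'" and Y: "Y \<in> cOb C"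
  shows "cCmp C (retr1 C A' Y) (copmor C f (cId C Y)) = cCmp C f (retr1 C A Y)"
proof -
  have o: "A \<in> cOb C" "A' \<in> cOb C" using Hom_ob f by blast+
  note m = copmor[OF f id_Hom[OF Y]]
  note ra = r1[OF o(1) Y] and rb = r1[OF o(2) Y]
  show ?thesis
  proof (rule cop_ext[OF o(1) Y comp_Hom[OF m(1) rb(1)] comp_Hom[OF ra(1) f]])
    have "cCmp C (cCmp C (retr1 C A' Y) (copmor C f (cId C Y))) (cIn1 C A Y)
       = cCmp C (retr1 C A' Y) (cCmp C (cIn1 C A' Y) f)"
      using assoc[OF in1[OF o(1) Y] m(1) rb(1)] m(2) by simp
    also have "\<dots> = f" using assoc[OF f in1[OF o(2) Y] rb(1)] rb(2) id_l[OF f] by simp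
    also have "\<dots> = cCmp C (cCmp C f (retr1 C A Y)) (cIn1 C A Y)"
      using assoc[OF in1[OF o(1) Y] ra(1) f] ra(2) id_r[OF f] by simp
    finally show "cCmp C (cCmp C (retr1 C A' Y) (copmor C f (cId C Y))) (cIn1 C A Y) =
      cCmp C (cCmp C f (retr1 C A Y)) (cIn1 C A Y)" .
  next
    have "cCmp C (cCmp C (retr1 C A' Y) (copmor C f (cId C Y))) (cIn2 C A Y)
       = cCmp C (retr1 C A' Y) (cCmp C (cIn2 C A' Y) (cId C Y))"
      using assoc[OF in2[OF o(1) Y] m(1) rb(1)] m(3) by simp
    also have "\<dots> = zmor C Y A'" using id_r[OF in2[OF o(2) Y]] rb(3) by simp
    also have "\<dots> = cCmp C (cCmp C f (retr1 C A Y)) (cIn2 C A Y)"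
      using assoc[OF in2[OF o(1) Y] ra(1) f] ra(3) zmor_l[OF f Y] by simp
    finally show "cCmp C (cCmp C (retr1 C A' Y) (copmor C f (cId C Y))) (cIn2 C A Y) =
      cCmp C (cCmp C f (retr1 C A Y)) (cIn2 C A Y)" .
  qed
qed

lemma r2_nat: assumes f: "f \<in> HomC C A A'" and Y: "Y \<in> cOb C"
  shows "cCmp C (retr2 C A' Y) (copmor C f (cId C Y)) = retr2 C A Y"
proof -
  have o: "A \<in> cOb C" "A' \<in> cOb C" using Hom_ob f by blast+
  note m = copmor[OF f id_Hom[OF Y]]
  note ra = r2[OF o(1) Y] and rb = r2[OF o(2) Y]
  show ?thesis
  proof (rule cop_ext[OF o(1) Y comp_Hom[OF m(1) rb(1)] ra(1)])
    have "cCmp C (cCmp C (retr2 C A' Y) (copmor C f (cId C Y))) (cIn1 C A Y)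
       = cCmp C (retr2 C A' Y) (cCmp C (cIn1 C A' Y) f)"
      using assoc[OF in1[OF o(1) Y] m(1) rb(1)] m(2) by simp
    also have "\<dots> = zmor C A Y" using assoc[OF f in1[OF o(2) Y] rb(1)] rb(2) zmor_r[OF f Y] by simp
    finally show "cCmp C (cCmp C (retr2 C A' Y) (copmor C f (cId C Y))) (cIn1 C A Y) =
      cCmp C (retr2 C A Y) (cIn1 C A Y)" using ra(2) by simp
  next
    have "cCmp C (cCmp C (retr2 C A' Y) (copmor C f (cId C Y))) (cIn2 C A Y)
       = cCmp C (retr2 C A' Y) (cCmp C (cIn2 C A' Y) (cId C Y))"
      using assoc[OF in2[OF o(1) Y] m(1) rb(1)] m(3) by simp
    also have "\<dots> = cId C Y" using id_r[OF in2[OF o(2) Y]] rb(3) by simp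
    finally show "cCmp C (cCmp C (retr2 C A' Y) (copmor C f (cId C Y))) (cIn2 C A Y) =
      cCmp C (retr2 C A Y) (cIn2 C A Y)" using ra(3) by simp
  qed
qed

lemma i2r2: assumes Y: "Y \<in> cOb C"
  shows "cCmp C (cIn2 C (cZero C) Y) (retr2 C (cZero C) Y) = cId C (cCop C (cZero C) Y)"
proof -
  note Z = Z_ob
  note r = r2[OF Z Y]
  have c: "cCop C (cZero C) Y \<in> cOb C" using cop_ob Z Y by blast
  show ?thesis
  proof (rule cop_ext[OF Z Y comp_Hom[OF r(1) in2[OF Z Y]] id_Hom[OF c]])
    have "cCmp C (cCmp C (cIn2 C (cZero C) Y) (retr2 C (cZero C) Y)) (cIn1 C (cZero C) Y)
      \<in> HomC C (cZero C) (cCop C (cZero C) Y)"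
      by (rule comp_Hom[OF in1[OF Z Y] comp_Hom[OF r(1) in2[OF Z Y]]])
    moreover have "cCmp C (cId C (cCop C (cZero C) Y)) (cIn1 C (cZero C) Y)
      \<in> HomC C (cZero C) (cCop C (cZero C) Y)"
      by (rule comp_Hom[OF in1[OF Z Y] id_Hom[OF c]])
    ultimately show "cCmp C (cCmp C (cIn2 C (cZero C) Y) (retr2 C (cZero C) Y)) (cIn1 C (cZero C) Y) =
      cCmp C (cId C (cCop C (cZero C) Y)) (cIn1 C (cZero C) Y)" using fromZ_uniq by metis
  next
    show "cCmp C (cCmp C (cIn2 C (cZero C) Y) (retr2 C (cZero C) Y)) (cIn2 C (cZero C) Y) =
      cCmp C (cId C (cCop C (cZero C) Y)) (cIn2 C (cZero C) Y)"
      using assoc[OF in2[OF Z Y] r(1) in2[OF Z Y]] r(3) id_l[OF in2[OF Z Y]] id_r[OF in2[OF Z Y]] by simp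
  qed
qed

end


definition cr2o :: "('o,'m) pcat \<Rightarrow> ('o \<Rightarrow> 'g monoid) \<Rightarrow> ('m \<Rightarrow> 'g \<Rightarrow> 'g) \<Rightarrow> 'o \<Rightarrow> 'o \<Rightarrow> 'g monoid" where
 "cr2o C Ko Km Y A = (Ko (cCop C A Y))\<lparr>carrier := {x \<in> carrier (Ko (cCop C A Y)).
     Km (retr1 C A Y) x = \<one>\<^bsub>Ko A\<^esub> \<and> Km (retr2 C A Y) x = \<one>\<^bsub>Ko Y\<^esub>}\<rparr>"

definition cr2m :: "('o,'m) pcat \<Rightarrow> ('m \<Rightarrow> 'g \<Rightarrow> 'g) \<Rightarrow> 'o \<Rightarrow> 'm \<Rightarrow> 'g \<Rightarrow> 'g" where
 "cr2m C Km Y f = Km (copmor C f (cId C Y))"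

lemma grp_simps: "comm_group G \<Longrightarrow> group G" by (simp add: comm_group_def)

context pc begin

lemma ar_Hom: "f \<in> cAr C \<Longrightarrow> f \<in> HomC C (cDom C f) (cCod C f)" by (simp add: Hom_iff)

lemma F_grp: "ab_functor C Ko Km \<Longrightarrow> P \<in> cOb C \<Longrightarrow> comm_group (Ko P)"
  unfolding ab_functor_def by blast

lemma F_hom: "ab_functor C Ko Km \<Longrightarrow> f \<in> HomC C P Q \<Longrightarrow> Km f \<in> hom (Ko P) (Ko Q)"
  unfolding ab_functor_def Hom_iff by blast

lemma F_id: "ab_functor C Ko Km \<Longrightarrow> P \<in> cOb C \<Longrightarrow> x \<in> carrier (Ko P) \<Longrightarrow> Km (cId C P) x = x"
  unfolding ab_functor_def by blast

lemma F_comp: "ab_functor C Ko Km \<Longrightarrow> f \<in> HomC C P Q \<Longrightarrow> g \<in> HomC C Q R \<Longrightarrow> x \<in> carrier (Ko P)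
   \<Longrightarrow> Km (cCmp C g f) x = Km g (Km f x)"
  unfolding ab_functor_def Hom_iff by metis

lemma F_closed: "ab_functor C Ko Km \<Longrightarrow> f \<in> HomC C P Q \<Longrightarrow> x \<in> carrier (Ko P) \<Longrightarrow> Km f x \<in> carrier (Ko Q)"
  using F_hom unfolding hom_def by blast

lemma F_one: assumes "ab_functor C Ko Km" "f \<in> HomC C P Q" shows "Km f \<one>\<^bsub>Ko P\<^esub> = \<one>\<^bsub>Ko Q\<^esub>"
  using hom_one[OF F_hom[OF assms]] F_grp[OF assms(1)] Hom_ob[OF assms(2)] grp_simps by blast

lemma F_mult: assumes "ab_functor C Ko Km" "f \<in> HomC C P Q" "x \<in> carrier (Ko P)" "y \<in> carrier (Ko P)"
  shows "Km f (x \<otimes>\<^bsub>Ko P\<^esub> y) = Km f x \<otimes>\<^bsub>Ko Q\<^esub> Km f y"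
  using hom_mult[OF F_hom[OF assms(1,2)] assms(3,4)] .

lemma F_inv: assumes "ab_functor C Ko Km" "f \<in> HomC C P Q" "x \<in> carrier (Ko P)"
  shows "Km f (inv\<^bsub>Ko P\<^esub> x) = inv\<^bsub>Ko Q\<^esub> (Km f x)"
proof -
  have "group_hom (Ko P) (Ko Q) (Km f)"
    using ghom[OF F_hom[OF assms(1,2)]] F_grp[OF assms(1)] Hom_ob[OF assms(2)] grp_simps by blast
  then show ?thesis by (rule group_hom.hom_inv[OF _ assms(3)])
qed

lemma F_zmor: assumes "ab_functor C Ko Km" "reduced C Ko" "P \<in> cOb C" "Q \<in> cOb C" "x \<in> carrier (Ko P)"
  shows "Km (zmor C P Q) x = \<one>\<^bsub>Ko Q\<^esub>"
proof -
  have "Km (zmor C P Q) x = Km (fromZ C Q) (Km (toZ C P) x)"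
    unfolding zmor_def by (rule F_comp[OF assms(1) toZ[OF assms(3)] fromZ[OF assms(4)] assms(5)])
  also have "Km (toZ C P) x = \<one>\<^bsub>Ko (cZero C)\<^esub>"
    using F_closed[OF assms(1) toZ[OF assms(3)] assms(5)] assms(2) unfolding reduced_def by blast
  also have "Km (fromZ C Q) \<one>\<^bsub>Ko (cZero C)\<^esub> = \<one>\<^bsub>Ko Q\<^esub>" by (rule F_one[OF assms(1) fromZ[OF assms(4)]])
  finally show ?thesis .
qed

end

context pc begin

lemma cr2_carrier: "carrier (cr2o C Ko Km Y A) = {x \<in> carrier (Ko (cCop C A Y)).
     Km (retr1 C A Y) x = \<one>\<^bsub>Ko A\<^esub> \<and> Km (retr2 C A Y) x = \<one>\<^bsub>Ko Y\<^esub>}"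
  by (simp add: cr2o_def)

lemma cr2_one: "\<one>\<^bsub>cr2o C Ko Km Y A\<^esub> = \<one>\<^bsub>Ko (cCop C A Y)\<^esub>" by (simp add: cr2o_def)
lemma cr2_mult: "(\<otimes>\<^bsub>cr2o C Ko Km Y A\<^esub>) = (\<otimes>\<^bsub>Ko (cCop C A Y)\<^esub>)" by (simp add: cr2o_def)

lemma cr2_grp: assumes F: "ab_functor C Ko Km" and A: "A \<in> cOb C" and Y: "Y \<in> cOb C"
  shows "comm_group (cr2o C Ko Km Y A)"
  unfolding cr2o_def
  apply (rule ker2_comm)
  using F_grp[OF F] cop_ob A Y grp_simps F_hom[OF F] r1 r2 by blast+

lemma cr2_functor: assumes F: "ab_functor C Ko Km" and R: "reduced C Ko" and Y: "Y \<in> cOb C"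
  shows "ab_functor C (cr2o C Ko Km Y) (cr2m C Km Y)"
  unfolding ab_functor_def
proof (intro conjI ballI impI)
  fix P assume "P \<in> cOb C" then show "comm_group (cr2o C Ko Km Y P)" using cr2_grp F Y by blast
next
  fix f assume f0: "f \<in> cAr C"
  define A A' where "A = cDom C f" "A' = cCod C f"
  have f: "f \<in> HomC C A A'" using f0 A_A'_def ar_Hom by simp
  have o: "A \<in> cOb C" "A' \<in> cOb C" using Hom_ob f by blast+
  note m = copmor[OF f id_Hom[OF Y]]
  have h: "Km (copmor C f (cId C Y)) \<in> hom (Ko (cCop C A Y)) (Ko (cCop C A' Y))" using F_hom[OF F m(1)] .
  show "cr2m C Km Y f \<in> hom (cr2o C Ko Km Y (cDom C f)) (cr2o C Ko Km Y (cCod C f))"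
    unfolding A_A'_def[symmetric] hom_def cr2_mult cr2m_def
  proof (intro CollectI conjI ballI Pi_I)
    fix x assume x: "x \<in> carrier (cr2o C Ko Km Y A)"
    then have x1: "x \<in> carrier (Ko (cCop C A Y))" "Km (retr1 C A Y) x = \<one>\<^bsub>Ko A\<^esub>"
      "Km (retr2 C A Y) x = \<one>\<^bsub>Ko Y\<^esub>" by (auto simp: cr2_carrier)
    have "Km (retr1 C A' Y) (Km (copmor C f (cId C Y)) x) = Km (cCmp C (retr1 C A' Y) (copmor C f (cId C Y))) x"
      using F_comp[OF F m(1) r1(1)[OF o(2) Y] x1(1)] by simp
    also have "\<dots> = Km f (Km (retr1 C A Y) x)" using r1_nat[OF f Y] F_comp[OF F r1(1)[OF o(1) Y] f x1(1)] by simp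
    also have "\<dots> = \<one>\<^bsub>Ko A'\<^esub>" using x1(2) F_one[OF F f] by simp
    finally have a: "Km (retr1 C A' Y) (Km (copmor C f (cId C Y)) x) = \<one>\<^bsub>Ko A'\<^esub>" .
    have "Km (retr2 C A' Y) (Km (copmor C f (cId C Y)) x) = Km (cCmp C (retr2 C A' Y) (copmor C f (cId C Y))) x"
      using F_comp[OF F m(1) r2(1)[OF o(2) Y] x1(1)] by simp
    also have "\<dots> = \<one>\<^bsub>Ko Y\<^esub>" using r2_nat[OF f Y] x1(3) by simp
    finally have b: "Km (retr2 C A' Y) (Km (copmor C f (cId C Y)) x) = \<one>\<^bsub>Ko Y\<^esub>" .
    show "Km (copmor C f (cId C Y)) x \<in> carrier (cr2o C Ko Km Y A')"
      using a b F_closed[OF F m(1) x1(1)] by (simp add: cr2_carrier)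
  next
    fix x y assume "x \<in> carrier (cr2o C Ko Km Y A)" "y \<in> carrier (cr2o C Ko Km Y A)"
    then show "Km (copmor C f (cId C Y)) (x \<otimes>\<^bsub>Ko (cCop C A Y)\<^esub> y) =
       Km (copmor C f (cId C Y)) x \<otimes>\<^bsub>Ko (cCop C A' Y)\<^esub> Km (copmor C f (cId C Y)) y"
      using hom_mult[OF h] by (simp add: cr2_carrier)
  qed
next
  fix P x assume P: "P \<in> cOb C" and x: "x \<in> carrier (cr2o C Ko Km Y P)"
  show "cr2m C Km Y (cId C P) x = x"
    unfolding cr2m_def copmor_id[OF P Y]
    using F_id[OF F cop_ob[OF P Y]] x by (simp add: cr2_carrier)
next
  fix f g assume f0: "f \<in> cAr C" and g0: "g \<in> cAr C" and fg: "cCod C f = cDom C g"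
  fix x assume x: "x \<in> carrier (cr2o C Ko Km Y (cDom C f))"
  have f: "f \<in> HomC C (cDom C f) (cCod C f)" and g: "g \<in> HomC C (cCod C f) (cCod C g)"
    using f0 g0 fg by (auto simp: Hom_iff)
  have eq: "copmor C (cCmp C g f) (cId C Y) = cCmp C (copmor C g (cId C Y)) (copmor C f (cId C Y))"
    using copmor_comp[OF f g id_Hom[OF Y] id_Hom[OF Y]] id_l[OF id_Hom[OF Y]] by simp
  show "cr2m C Km Y (cCmp C g f) x = cr2m C Km Y g (cr2m C Km Y f x)"
    unfolding cr2m_def eq
    using F_comp[OF F copmor(1)[OF f id_Hom[OF Y]] copmor(1)[OF g id_Hom[OF Y]]] x
    by (simp add: cr2_carrier)
qed

lemma cr2_reduced: assumes F: "ab_functor C Ko Km" and R: "reduced C Ko" and Y: "Y \<in> cOb C"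
  shows "reduced C (cr2o C Ko Km Y)"
  unfolding reduced_def
proof
  let ?Z = "cZero C"
  have c: "cCop C ?Z Y \<in> cOb C" using cop_ob Z_ob Y by blast
  show "carrier (cr2o C Ko Km Y ?Z) \<subseteq> {\<one>\<^bsub>cr2o C Ko Km Y ?Z\<^esub>}"
  proof
    fix x assume "x \<in> carrier (cr2o C Ko Km Y ?Z)"
    then have x: "x \<in> carrier (Ko (cCop C ?Z Y))" "Km (retr2 C ?Z Y) x = \<one>\<^bsub>Ko Y\<^esub>"
      by (auto simp: cr2_carrier)
    have "x = Km (cId C (cCop C ?Z Y)) x" using F_id[OF F c x(1)] by simp
    also have "\<dots> = Km (cIn2 C ?Z Y) (Km (retr2 C ?Z Y) x)"
      using i2r2[OF Y] F_comp[OF F r2(1)[OF Z_ob Y] in2[OF Z_ob Y] x(1)] by simp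
    also have "\<dots> = \<one>\<^bsub>Ko (cCop C ?Z Y)\<^esub>" using x(2) F_one[OF F in2[OF Z_ob Y]] by simp
    finally show "x \<in> {\<one>\<^bsub>cr2o C Ko Km Y ?Z\<^esub>}" by (simp add: cr2_one)
  qed
next
  let ?Z = "cZero C"
  have "\<one>\<^bsub>cr2o C Ko Km Y ?Z\<^esub> \<in> carrier (cr2o C Ko Km Y ?Z)"
    using cr2_grp[OF F Z_ob Y] grp_simps group.is_monoid monoid.one_closed by blast
  then show "{\<one>\<^bsub>cr2o C Ko Km Y ?Z\<^esub>} \<subseteq> carrier (cr2o C Ko Km Y ?Z)" by simp
qed

end


lemma iso_trivial: assumes "carrier G = {\<one>\<^bsub>G\<^esub>}" "carrier H = {\<one>\<^bsub>H\<^esub>}" "h \<in> hom G H"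
  "group G" "group H" shows "h \<in> iso G H"
proof -
  have "h \<one>\<^bsub>G\<^esub> = \<one>\<^bsub>H\<^esub>" using hom_one assms by blast
  then show ?thesis using assms unfolding iso_def bij_betw_def by auto
qed

lemma iso_inj: "h \<in> iso G H \<Longrightarrow> inj_on h (carrier G)"
  by (simp add: iso_def bij_betw_def)

lemma iso_img: "h \<in> iso G H \<Longrightarrow> y \<in> carrier H \<Longrightarrow> \<exists>x\<in>carrier G. h x = y"
  by (force simp: iso_def bij_betw_def)

lemma comm_alg1: fixes G (structure) assumes "comm_group G" "u \<in> carrier G" "v \<in> carrier G" "y \<in> carrier G"
  shows "u \<otimes>\<^bsub>G\<^esub> v \<otimes>\<^bsub>G\<^esub> (y \<otimes>\<^bsub>G\<^esub> inv\<^bsub>G\<^esub> u \<otimes>\<^bsub>G\<^esub> inv\<^bsub>G\<^esub> v) = y"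
proof -
  interpret comm_group G by fact
  have uv: "u \<otimes> v \<in> carrier G" using assms by simp
  have "y \<otimes> inv u \<otimes> inv v = y \<otimes> inv (u \<otimes> v)" using assms(2-4) by (simp add: m_assoc inv_mult)
  also have "\<dots> = inv (u \<otimes> v) \<otimes> y" using assms(2-4) uv by (simp add: m_comm)
  finally have e: "y \<otimes> inv u \<otimes> inv v = inv (u \<otimes> v) \<otimes> y" .
  have "u \<otimes> v \<otimes> (inv (u \<otimes> v) \<otimes> y) = (u \<otimes> v \<otimes> inv (u \<otimes> v)) \<otimes> y"
    by (rule m_assoc[symmetric]) (simp_all add: assms uv)
  also have "\<dots> = y" using uv assms(4) by simp
  finally show ?thesis using e by simp
qed

lemma comm_alg2: fixes G (structure) assumes "group G" "x \<in> carrier G" "y \<in> carrier G" "x \<otimes>\<^bsub>G\<^esub> inv\<^bsub>G\<^esub> y = \<one>\<^bsub>G\<^esub>"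
  shows "x = y"
proof -
  interpret group G by fact
  have "x = x \<otimes> (inv y \<otimes> y)" using assms(2,3) by simp
  also have "\<dots> = (x \<otimes> inv y) \<otimes> y" using assms(2,3) by (simp add: m_assoc)
  also have "\<dots> = y" using assms(3,4) by simp
  finally show ?thesis .
qed

context pc begin

lemma NT_hom: "nat_trans C Ko Km Lo Lm psi \<Longrightarrow> P \<in> cOb C \<Longrightarrow> psi P \<in> hom (Ko P) (Lo P)"
  unfolding nat_trans_def by blast

lemma NT_nat: "nat_trans C Ko Km Lo Lm psi \<Longrightarrow> f \<in> HomC C P Q \<Longrightarrow> x \<in> carrier (Ko P)
  \<Longrightarrow> psi Q (Km f x) = Lm f (psi P x)"
proof -
  assume a: "nat_trans C Ko Km Lo Lm psi" "f \<in> HomC C P Q" "x \<in> carrier (Ko P)"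
  have "\<forall>f\<in>cAr C. \<forall>x\<in>carrier (Ko (cDom C f)). psi (cCod C f) (Km f x) = Lm f (psi (cDom C f) x)"
    using a(1) unfolding nat_trans_def by (rule conjunct2)
  moreover have "f \<in> cAr C" "cDom C f = P" "cCod C f = Q" using a(2) Hom_iff by auto
  ultimately show ?thesis using a(3) by auto
qed

lemma NT_one: assumes "nat_trans C Ko Km Lo Lm psi" "ab_functor C Ko Km" "ab_functor C Lo Lm" "P \<in> cOb C"
  shows "psi P \<one>\<^bsub>Ko P\<^esub> = \<one>\<^bsub>Lo P\<^esub>"
  by (rule hom_one[OF NT_hom[OF assms(1,4)]]) (simp_all add: F_grp[OF assms(2,4)] F_grp[OF assms(3,4)] grp_simps)

lemma NT_closed: "nat_trans C Ko Km Lo Lm psi \<Longrightarrow> P \<in> cOb C \<Longrightarrow> x \<in> carrier (Ko P) \<Longrightarrow> psi P x \<in> carrier (Lo P)"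
  using NT_hom unfolding hom_def by blast

lemma cr2_nat: assumes F: "ab_functor C Ko Km" and L: "ab_functor C Lo Lm" and Y: "Y \<in> cOb C"
  and psi: "nat_trans C Ko Km Lo Lm psi"
  shows "nat_trans C (cr2o C Ko Km Y) (cr2m C Km Y) (cr2o C Lo Lm Y) (cr2m C Lm Y) (\<lambda>A. psi (cCop C A Y))"
  unfolding nat_trans_def
proof (intro conjI ballI)
  fix A assume A: "A \<in> cOb C"
  have c: "cCop C A Y \<in> cOb C" using cop_ob A Y by blast
  note h = NT_hom[OF psi c]
  show "psi (cCop C A Y) \<in> hom (cr2o C Ko Km Y A) (cr2o C Lo Lm Y A)"
    unfolding hom_def cr2_mult
  proof (intro CollectI conjI ballI Pi_I)
    fix x assume "x \<in> carrier (cr2o C Ko Km Y A)"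
    then have x: "x \<in> carrier (Ko (cCop C A Y))" "Km (retr1 C A Y) x = \<one>\<^bsub>Ko A\<^esub>"
      "Km (retr2 C A Y) x = \<one>\<^bsub>Ko Y\<^esub>" by (auto simp: cr2_carrier)
    have a: "Lm (retr1 C A Y) (psi (cCop C A Y) x) = \<one>\<^bsub>Lo A\<^esub>"
      using NT_nat[OF psi r1(1)[OF A Y] x(1)] x(2) NT_one[OF psi F L A] by simp
    have b: "Lm (retr2 C A Y) (psi (cCop C A Y) x) = \<one>\<^bsub>Lo Y\<^esub>"
      using NT_nat[OF psi r2(1)[OF A Y] x(1)] x(3) NT_one[OF psi F L Y] by simp
    show "psi (cCop C A Y) x \<in> carrier (cr2o C Lo Lm Y A)"
      using a b NT_closed[OF psi c x(1)] by (simp add: cr2_carrier)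
  next
    fix x y assume "x \<in> carrier (cr2o C Ko Km Y A)" "y \<in> carrier (cr2o C Ko Km Y A)"
    then show "psi (cCop C A Y) (x \<otimes>\<^bsub>Ko (cCop C A Y)\<^esub> y) =
       psi (cCop C A Y) x \<otimes>\<^bsub>Lo (cCop C A Y)\<^esub> psi (cCop C A Y) y"
      using hom_mult[OF h] by (simp add: cr2_carrier)
  qed
next
  fix f x assume f0: "f \<in> cAr C" and x: "x \<in> carrier (cr2o C Ko Km Y (cDom C f))"
  have f: "f \<in> HomC C (cDom C f) (cCod C f)" using f0 by (simp add: Hom_iff)
  show "psi (cCop C (cCod C f) Y) (cr2m C Km Y f x) = cr2m C Lm Y f (psi (cCop C (cDom C f) Y) x)"
    unfolding cr2m_def using NT_nat[OF psi copmor(1)[OF f id_Hom[OF Y]]] x by (simp add: cr2_carrier)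
qed

lemma retract_iso: assumes F: "ab_functor C Ko Km" and L: "ab_functor C Lo Lm"
  and psi: "nat_trans C Ko Km Lo Lm psi"
  and ii: "ii \<in> HomC C Xo P" and rr: "rr \<in> HomC C P Xo" and ri: "cCmp C rr ii = cId C Xo"
  and isoP: "psi P \<in> iso (Ko P) (Lo P)"
  shows "psi Xo \<in> iso (Ko Xo) (Lo Xo)"
proof -
  have o: "Xo \<in> cOb C" "P \<in> cOb C" using Hom_ob ii by blast+
  have inj: "inj_on (psi Xo) (carrier (Ko Xo))"
  proof (rule inj_onI)
    fix x x' assume x: "x \<in> carrier (Ko Xo)" "x' \<in> carrier (Ko Xo)" "psi Xo x = psi Xo x'"
    have "psi P (Km ii x) = psi P (Km ii x')" using NT_nat[OF psi ii] x by simp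
    then have "Km ii x = Km ii x'" using iso_inj[OF isoP] F_closed[OF F ii] x by (meson inj_onD)
    then have "Km rr (Km ii x) = Km rr (Km ii x')" by simp
    then show "x = x'" using F_comp[OF F ii rr] ri F_id[OF F o(1)] x by simp
  qed
  have sur: "psi Xo ` carrier (Ko Xo) = carrier (Lo Xo)"
  proof
    show "psi Xo ` carrier (Ko Xo) \<subseteq> carrier (Lo Xo)" using NT_closed[OF psi o(1)] by blast
  next
    show "carrier (Lo Xo) \<subseteq> psi Xo ` carrier (Ko Xo)"
    proof
      fix y assume y: "y \<in> carrier (Lo Xo)"
      obtain z where z: "z \<in> carrier (Ko P)" "psi P z = Lm ii y" using iso_img[OF isoP F_closed[OF L ii y]] by blast
      have "psi Xo (Km rr z) = Lm rr (Lm ii y)" using NT_nat[OF psi rr z(1)] z(2) by simp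
      also have "\<dots> = y" using F_comp[OF L ii rr y] ri F_id[OF L o(1) y] by simp
      finally show "y \<in> psi Xo ` carrier (Ko Xo)" using F_closed[OF F rr z(1)] by force
    qed
  qed
  show ?thesis using inj sur NT_hom[OF psi o(1)] unfolding iso_def bij_betw_def by blast
qed


lemma cr2_restrict_iso: assumes F: "ab_functor C Ko Km" and L: "ab_functor C Lo Lm"
  and psi: "nat_trans C Ko Km Lo Lm psi" and Xo: "Xo \<in> cOb C" and Y: "Y \<in> cOb C"
  and isoc: "psi (cCop C Xo Y) \<in> iso (Ko (cCop C Xo Y)) (Lo (cCop C Xo Y))"
  and injX: "inj_on (psi Xo) (carrier (Ko Xo))" and injY: "inj_on (psi Y) (carrier (Ko Y))"
  shows "psi (cCop C Xo Y) \<in> iso (cr2o C Ko Km Y Xo) (cr2o C Lo Lm Y Xo)"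
proof -
  note NT2 = cr2_nat[OF F L Y psi]
  have h: "psi (cCop C Xo Y) \<in> hom (cr2o C Ko Km Y Xo) (cr2o C Lo Lm Y Xo)"
    using NT_hom[OF NT2 Xo] by simp
  have inj: "inj_on (psi (cCop C Xo Y)) (carrier (cr2o C Ko Km Y Xo))"
    using iso_inj[OF isoc] by (rule inj_on_subset) (auto simp: cr2_carrier)
  have "carrier (cr2o C Lo Lm Y Xo) \<subseteq> psi (cCop C Xo Y) ` carrier (cr2o C Ko Km Y Xo)"
  proof
    fix y assume "y \<in> carrier (cr2o C Lo Lm Y Xo)"
    then have y: "y \<in> carrier (Lo (cCop C Xo Y))" "Lm (retr1 C Xo Y) y = \<one>\<^bsub>Lo Xo\<^esub>"
      "Lm (retr2 C Xo Y) y = \<one>\<^bsub>Lo Y\<^esub>" by (auto simp: cr2_carrier)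
    obtain x where x: "x \<in> carrier (Ko (cCop C Xo Y))" "psi (cCop C Xo Y) x = y"
      using iso_img[OF isoc y(1)] by blast
    have "psi Xo (Km (retr1 C Xo Y) x) = psi Xo \<one>\<^bsub>Ko Xo\<^esub>"
      using NT_nat[OF psi r1(1)[OF Xo Y] x(1)] x(2) y(2) NT_one[OF psi F L Xo] by simp
    then have a: "Km (retr1 C Xo Y) x = \<one>\<^bsub>Ko Xo\<^esub>"
      using injX F_closed[OF F r1(1)[OF Xo Y] x(1)] F_grp[OF F Xo] grp_simps
      by (meson group.is_monoid inj_onD monoid.one_closed)
    have "psi Y (Km (retr2 C Xo Y) x) = psi Y \<one>\<^bsub>Ko Y\<^esub>"
      using NT_nat[OF psi r2(1)[OF Xo Y] x(1)] x(2) y(3) NT_one[OF psi F L Y] by simp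
    then have b: "Km (retr2 C Xo Y) x = \<one>\<^bsub>Ko Y\<^esub>"
      using injY F_closed[OF F r2(1)[OF Xo Y] x(1)] F_grp[OF F Y] grp_simps
      by (meson group.is_monoid inj_onD monoid.one_closed)
    show "y \<in> psi (cCop C Xo Y) ` carrier (cr2o C Ko Km Y Xo)"
      using a b x by (force simp: cr2_carrier)
  qed
  moreover have "psi (cCop C Xo Y) ` carrier (cr2o C Ko Km Y Xo) \<subseteq> carrier (cr2o C Lo Lm Y Xo)"
    using h unfolding hom_def by blast
  ultimately show ?thesis using h inj unfolding iso_def bij_betw_def by blast
qed


lemma NT_mult: "nat_trans C Ko Km Lo Lm psi \<Longrightarrow> P \<in> cOb C \<Longrightarrow> x \<in> carrier (Ko P) \<Longrightarrow> y \<in> carrier (Ko P)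
  \<Longrightarrow> psi P (x \<otimes>\<^bsub>Ko P\<^esub> y) = psi P x \<otimes>\<^bsub>Lo P\<^esub> psi P y"
  by (rule hom_mult[OF NT_hom])

lemma NT_inv: assumes "nat_trans C Ko Km Lo Lm psi" "ab_functor C Ko Km" "ab_functor C Lo Lm" "P \<in> cOb C"
  "x \<in> carrier (Ko P)" shows "psi P (inv\<^bsub>Ko P\<^esub> x) = inv\<^bsub>Lo P\<^esub> (psi P x)"
proof -
  have "group_hom (Ko P) (Lo P) (psi P)"
    by (rule ghom[OF NT_hom[OF assms(1,4)]]) (simp_all add: F_grp[OF assms(2,4)] F_grp[OF assms(3,4)] grp_simps)
  then show ?thesis by (rule group_hom.hom_inv[OF _ assms(5)])
qed

lemma cr2_decomp_iso: assumes F: "ab_functor C Ko Km" and RF: "reduced C Ko"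
  and L: "ab_functor C Lo Lm" and RL: "reduced C Lo"
  and psi: "nat_trans C Ko Km Lo Lm psi" and Xo: "Xo \<in> cOb C" and Y: "Y \<in> cOb C"
  and isoX: "psi Xo \<in> iso (Ko Xo) (Lo Xo)" and isoY: "psi Y \<in> iso (Ko Y) (Lo Y)"
  and isoR: "psi (cCop C Xo Y) \<in> iso (cr2o C Ko Km Y Xo) (cr2o C Lo Lm Y Xo)"
  shows "psi (cCop C Xo Y) \<in> iso (Ko (cCop C Xo Y)) (Lo (cCop C Xo Y))"
proof -
  define c where "c = cCop C Xo Y"
  have c: "c \<in> cOb C" using cop_ob Xo Y c_def by blast
  interpret GK: comm_group "Ko c" using F_grp[OF F c] .
  interpret GL: comm_group "Lo c" using F_grp[OF L c] .
  interpret GX: comm_group "Ko Xo" using F_grp[OF F Xo] .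
  interpret GY: comm_group "Ko Y" using F_grp[OF F Y] .
  interpret LX: comm_group "Lo Xo" using F_grp[OF L Xo] .
  interpret LY: comm_group "Lo Y" using F_grp[OF L Y] .
  note r1c = r1[OF Xo Y, folded c_def] and r2c = r2[OF Xo Y, folded c_def]
  note i1c = in1[OF Xo Y, folded c_def] and i2c = in2[OF Xo Y, folded c_def]
  have inj: "inj_on (psi c) (carrier (Ko c))"
  proof (rule inj_onI)
    fix x x' assume x: "x \<in> carrier (Ko c)" "x' \<in> carrier (Ko c)" "psi c x = psi c x'"
    define z where "z = x \<otimes>\<^bsub>Ko c\<^esub> inv\<^bsub>Ko c\<^esub> x'"
    have z: "z \<in> carrier (Ko c)" using x z_def by simp
    have pz: "psi c z = \<one>\<^bsub>Lo c\<^esub>"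
      unfolding z_def using NT_mult[OF psi c] NT_inv[OF psi F L c] x NT_closed[OF psi c] by simp
    have "psi Xo (Km (retr1 C Xo Y) z) = psi Xo \<one>\<^bsub>Ko Xo\<^esub>"
      using NT_nat[OF psi r1c(1) z] pz F_one[OF L r1c(1)] NT_one[OF psi F L Xo] by simp
    then have a: "Km (retr1 C Xo Y) z = \<one>\<^bsub>Ko Xo\<^esub>"
      by (rule inj_onD[OF iso_inj[OF isoX] _ F_closed[OF F r1c(1) z] GX.one_closed])
    have "psi Y (Km (retr2 C Xo Y) z) = psi Y \<one>\<^bsub>Ko Y\<^esub>"
      using NT_nat[OF psi r2c(1) z] pz F_one[OF L r2c(1)] NT_one[OF psi F L Y] by simp
    then have b: "Km (retr2 C Xo Y) z = \<one>\<^bsub>Ko Y\<^esub>"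
      by (rule inj_onD[OF iso_inj[OF isoY] _ F_closed[OF F r2c(1) z] GY.one_closed])
    have zc: "z \<in> carrier (cr2o C Ko Km Y Xo)" using a b z by (simp add: cr2_carrier c_def)
    have oc: "\<one>\<^bsub>Ko c\<^esub> \<in> carrier (cr2o C Ko Km Y Xo)"
      using F_one[OF F r1c(1)] F_one[OF F r2c(1)] GK.one_closed by (simp add: cr2_carrier c_def)
    have "psi c z = psi c \<one>\<^bsub>Ko c\<^esub>" using pz NT_one[OF psi F L c] by simp
    then have "z = \<one>\<^bsub>Ko c\<^esub>" by (rule inj_onD[OF iso_inj[OF isoR[folded c_def]] _ zc oc])
    then show "x = x'" using comm_alg2[OF GK.is_group x(1,2)] z_def by simp
  qed
  have sur: "carrier (Lo c) \<subseteq> psi c ` carrier (Ko c)"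
  proof
    fix y assume y: "y \<in> carrier (Lo c)"
    define a where "a = Lm (retr1 C Xo Y) y"
    define b where "b = Lm (retr2 C Xo Y) y"
    have ab: "a \<in> carrier (Lo Xo)" "b \<in> carrier (Lo Y)" using F_closed[OF L r1c(1) y] F_closed[OF L r2c(1) y] a_def b_def by auto
    obtain a' where a': "a' \<in> carrier (Ko Xo)" "psi Xo a' = a" using iso_img[OF isoX ab(1)] by blast
    obtain b' where b': "b' \<in> carrier (Ko Y)" "psi Y b' = b" using iso_img[OF isoY ab(2)] by blast
    define u where "u = Lm (cIn1 C Xo Y) a"
    define v where "v = Lm (cIn2 C Xo Y) b"
    have uv: "u \<in> carrier (Lo c)" "v \<in> carrier (Lo c)" using F_closed[OF L i1c ab(1)] F_closed[OF L i2c ab(2)] u_def v_def by auto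
    define w where "w = y \<otimes>\<^bsub>Lo c\<^esub> inv\<^bsub>Lo c\<^esub> u \<otimes>\<^bsub>Lo c\<^esub> inv\<^bsub>Lo c\<^esub> v"
    have w: "w \<in> carrier (Lo c)" using w_def uv y by simp
    have r1u: "Lm (retr1 C Xo Y) u = a" unfolding u_def
      using F_comp[OF L i1c r1c(1) ab(1)] r1c(2) F_id[OF L Xo ab(1)] by simp
    have r1v: "Lm (retr1 C Xo Y) v = \<one>\<^bsub>Lo Xo\<^esub>" unfolding v_def
      using F_comp[OF L i2c r1c(1) ab(2)] r1c(3) F_zmor[OF L RL Y Xo ab(2)] by simp
    have r2u: "Lm (retr2 C Xo Y) u = \<one>\<^bsub>Lo Y\<^esub>" unfolding u_def
      using F_comp[OF L i1c r2c(1) ab(1)] r2c(2) F_zmor[OF L RL Xo Y ab(1)] by simp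
    have r2v: "Lm (retr2 C Xo Y) v = b" unfolding v_def
      using F_comp[OF L i2c r2c(1) ab(2)] r2c(3) F_id[OF L Y ab(2)] by simp
    have w1: "Lm (retr1 C Xo Y) w = \<one>\<^bsub>Lo Xo\<^esub>"
      unfolding w_def using F_mult[OF L r1c(1)] F_inv[OF L r1c(1)] uv y r1u r1v a_def ab by simp
    have w2: "Lm (retr2 C Xo Y) w = \<one>\<^bsub>Lo Y\<^esub>"
      unfolding w_def using F_mult[OF L r2c(1)] F_inv[OF L r2c(1)] uv y r2u r2v b_def ab by simp
    have wc: "w \<in> carrier (cr2o C Lo Lm Y Xo)" using w w1 w2 by (simp add: cr2_carrier c_def)
    obtain w' where w': "w' \<in> carrier (cr2o C Ko Km Y Xo)" "psi c w' = w"
      using iso_img[OF isoR wc] c_def by blast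
    have w'c: "w' \<in> carrier (Ko c)" using w' by (simp add: cr2_carrier c_def)
    define x where "x = Km (cIn1 C Xo Y) a' \<otimes>\<^bsub>Ko c\<^esub> Km (cIn2 C Xo Y) b' \<otimes>\<^bsub>Ko c\<^esub> w'"
    have x1: "Km (cIn1 C Xo Y) a' \<in> carrier (Ko c)" "Km (cIn2 C Xo Y) b' \<in> carrier (Ko c)"
      using F_closed[OF F i1c a'(1)] F_closed[OF F i2c b'(1)] by auto
    have xc: "x \<in> carrier (Ko c)" using x_def x1 w'c by simp
    have "psi c x = u \<otimes>\<^bsub>Lo c\<^esub> v \<otimes>\<^bsub>Lo c\<^esub> w"
      unfolding x_def u_def v_def using NT_mult[OF psi c] x1 w'c NT_nat[OF psi i1c a'(1)] NT_nat[OF psi i2c b'(1)]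
        a' b' w'(2) F_closed[OF F i1c a'(1)] by simp
    also have "\<dots> = y" unfolding w_def by (rule comm_alg1[OF F_grp[OF L c] uv y])
    finally show "y \<in> psi c ` carrier (Ko c)" using xc by force
  qed
  have "psi c ` carrier (Ko c) \<subseteq> carrier (Lo c)" using NT_closed[OF psi c] by blast
  then show ?thesis using inj sur NT_hom[OF psi c] unfolding iso_def bij_betw_def c_def by blast
qed


end

primrec Kseq :: "('o,'m) pcat \<Rightarrow> 'o \<Rightarrow> ('o \<Rightarrow> 'g monoid) \<Rightarrow> ('m \<Rightarrow> 'g \<Rightarrow> 'g) \<Rightarrow> nat
    \<Rightarrow> ('o \<Rightarrow> 'g monoid) \<times> ('m \<Rightarrow> 'g \<Rightarrow> 'g)" where
  "Kseq C E Ko Km 0 = (Ko, Km)"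
| "Kseq C E Ko Km (Suc j) = (cr2o C (fst (Kseq C E Ko Km j)) (snd (Kseq C E Ko Km j)) E,
       cr2m C (snd (Kseq C E Ko Km j)) E)"

lemma cr_Kseq: "(\<forall>A. fst (cr C Fo Fm (Suc (Suc j))) (A # E # replicate j E) = fst (Kseq C E Fo Fm (Suc j)) A) \<and>
  (\<forall>f. snd (cr C Fo Fm (Suc (Suc j))) (f # cId C E # replicate j (cId C E)) = snd (Kseq C E Fo Fm (Suc j)) f)"
  by (induction j) (simp_all add: cr2first_def lift1_def cr2o_def cr2m_def)

lemma amb_cons: "amb C (A # B # Ys) = amb C (cCop C A B # Ys)" by (simp add: amb_def)
lemma amb_one: "amb C [A] = A" by (simp add: amb_def)

lemma foldl_rep: "foldl (cCop C) Q0 (replicate (Suc i) E) = cCop C (foldl (cCop C) Q0 (replicate i E)) E"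
  by (induction i arbitrary: Q0) auto

lemma amb_rep: "amb C (E # E # replicate i E) = cCop C (amb C (E # replicate i E)) E"
  unfolding amb_def using foldl_rep[of C E i E] by simp

context pc begin

lemma cr1_eq: assumes F: "ab_functor C Fo Fm" and R: "reduced C Fo" and A: "A \<in> cOb C"
  shows "fst (cr C Fo Fm (Suc 0)) [A] = Fo A"
proof -
  have "{x \<in> carrier (Fo A). Fm (toZ C A) x = \<one>\<^bsub>Fo (cZero C)\<^esub>} = carrier (Fo A)"
    using F_closed[OF F toZ[OF A]] R unfolding reduced_def by blast
  then show ?thesis by (simp add: cr1_def)
qed

lemma crK_all: assumes F: "ab_functor C Fo Fm" and R: "reduced C Fo" and A: "A \<in> cOb C"
  shows "fst (cr C Fo Fm (Suc j)) (A # replicate j E) = fst (Kseq C E Fo Fm j) A"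
proof (cases j)
  case 0
  then show ?thesis using cr1_eq[OF F R A] by simp
next
  case (Suc j')
  then show ?thesis using cr_Kseq[of C Fo Fm j' E] by simp
qed

lemma Kseq_fun: assumes F: "ab_functor C Fo Fm" and R: "reduced C Fo" and E: "E \<in> cOb C"
  shows "ab_functor C (fst (Kseq C E Fo Fm j)) (snd (Kseq C E Fo Fm j)) \<and> reduced C (fst (Kseq C E Fo Fm j))"
proof (induction j)
  case 0
  then show ?case using F R by simp
next
  case (Suc j)
  then have a: "ab_functor C (fst (Kseq C E Fo Fm j)) (snd (Kseq C E Fo Fm j))"
    and b: "reduced C (fst (Kseq C E Fo Fm j))" by auto
  show ?case using cr2_functor[OF a b E] cr2_reduced[OF a b E] by simp
qed

lemma Kseq_nat: assumes F: "ab_functor C Fo Fm" and R: "reduced C Fo"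
  and G: "ab_functor C Go Gm" and RG: "reduced C Go" and E: "E \<in> cOb C"
  and phi: "nat_trans C Fo Fm Go Gm phi"
  shows "nat_trans C (fst (Kseq C E Fo Fm j)) (snd (Kseq C E Fo Fm j)) (fst (Kseq C E Go Gm j)) (snd (Kseq C E Go Gm j))
     (\<lambda>A. phi (amb C (A # replicate j E)))"
proof (induction j)
  case 0
  have "(\<lambda>A. phi (amb C (A # replicate 0 E))) = phi" by (simp add: amb_one)
  then show ?case using phi by simp
next
  case (Suc j)
  have eq: "(\<lambda>A. phi (amb C (A # replicate (Suc j) E))) = (\<lambda>A. (\<lambda>A. phi (amb C (A # replicate j E))) (cCop C A E))"
    by (simp add: amb_cons)
  show ?case unfolding eq using cr2_nat[OF conjunct1[OF Kseq_fun[OF F R E]] conjunct1[OF Kseq_fun[OF G RG E]] E Suc]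
    by simp
qed

lemma Kseq_triv: assumes F: "ab_functor C Fo Fm" and R: "reduced C Fo" and E: "E \<in> cOb C"
  and T: "\<forall>A\<in>cOb C. carrier (fst (Kseq C E Fo Fm n) A) = {\<one>\<^bsub>fst (Kseq C E Fo Fm n) A\<^esub>}"
  shows "n \<le> j \<Longrightarrow> \<forall>A\<in>cOb C. carrier (fst (Kseq C E Fo Fm j) A) = {\<one>\<^bsub>fst (Kseq C E Fo Fm j) A\<^esub>}"
proof (induction j)
  case 0
  then show ?case using T by simp
next
  case (Suc j)
  show ?case
  proof (cases "n = Suc j")
    case True then show ?thesis using T by simp
  next
    case False
    then have IH: "\<forall>A\<in>cOb C. carrier (fst (Kseq C E Fo Fm j) A) = {\<one>\<^bsub>fst (Kseq C E Fo Fm j) A\<^esub>}"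
      using Suc by simp
    show ?thesis
    proof
      fix A assume A: "A \<in> cOb C"
      note KF = Kseq_fun[OF F R E, of j]
      have c: "cCop C A E \<in> cOb C" using cop_ob A E by blast
      have g: "comm_group (cr2o C (fst (Kseq C E Fo Fm j)) (snd (Kseq C E Fo Fm j)) E A)"
        using cr2_grp[OF conjunct1[OF KF] A E] .
      then have o: "\<one>\<^bsub>cr2o C (fst (Kseq C E Fo Fm j)) (snd (Kseq C E Fo Fm j)) E A\<^esub> \<in>
          carrier (cr2o C (fst (Kseq C E Fo Fm j)) (snd (Kseq C E Fo Fm j)) E A)"
        by (simp add: grp_simps group.is_monoid monoid.one_closed)
      have "carrier (cr2o C (fst (Kseq C E Fo Fm j)) (snd (Kseq C E Fo Fm j)) E A)
         \<subseteq> {\<one>\<^bsub>cr2o C (fst (Kseq C E Fo Fm j)) (snd (Kseq C E Fo Fm j)) E A\<^esub>}"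
        using IH c by (auto simp: cr2_carrier cr2_one)
      then show "carrier (fst (Kseq C E Fo Fm (Suc j)) A) = {\<one>\<^bsub>fst (Kseq C E Fo Fm (Suc j)) A\<^esub>}"
        using o by auto
    qed
  qed
qed

end

locale prp = pc +
  fixes E :: 'o and n :: nat
    and Fo :: "'o \<Rightarrow> 'g monoid" and Fm :: "'m \<Rightarrow> 'g \<Rightarrow> 'g"
    and Go :: "'o \<Rightarrow> 'h monoid" and Gm :: "'m \<Rightarrow> 'h \<Rightarrow> 'h"
    and phi :: "'o \<Rightarrow> 'g \<Rightarrow> 'h"
  assumes E: "E \<in> cOb C"
    and gen: "\<forall>P\<in>cOb C. \<exists>k. is_iso_obj C P (copow C E k)"
    and F: "ab_functor C Fo Fm" and Fred: "reduced C Fo" and Fpol: "polynomial_deg_le C Fo Fm n"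
    and G: "ab_functor C Go Gm" and Gred: "reduced C Go" and Gpol: "polynomial_deg_le C Go Gm n"
    and phi: "nat_trans C Fo Fm Go Gm phi"
begin

abbreviation "KF j \<equiv> Kseq C E Fo Fm j"
abbreviation "KG j \<equiv> Kseq C E Go Gm j"
abbreviation "ps j \<equiv> (\<lambda>A. phi (amb C (A # replicate j E)))"

lemma KFf: "ab_functor C (fst (KF j)) (snd (KF j))" "reduced C (fst (KF j))"
  using Kseq_fun[OF F Fred E] by auto
lemma KGf: "ab_functor C (fst (KG j)) (snd (KG j))" "reduced C (fst (KG j))"
  using Kseq_fun[OF G Gred E] by auto
lemma NTj: "nat_trans C (fst (KF j)) (snd (KF j)) (fst (KG j)) (snd (KG j)) (ps j)"
  by (rule Kseq_nat[OF F Fred G Gred E phi])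

lemma copow_ob: "copow C E k \<in> cOb C"
  by (induction k) (simp_all add: Z_ob cop_ob E)

lemma A_ob: "amb C (E # replicate i E) \<in> cOb C"
  by (induction i) (simp_all add: amb_one E amb_rep cop_ob)

lemma retrA: "\<exists>s t. s \<in> HomC C (amb C (E # replicate i E)) (copow C E (Suc i)) \<and>
   t \<in> HomC C (copow C E (Suc i)) (amb C (E # replicate i E)) \<and>
   cCmp C t s = cId C (amb C (E # replicate i E))"
proof (induction i)
  case 0
  show ?case using in2[OF Z_ob E] r2[OF Z_ob E] by (auto simp: amb_one)
next
  case (Suc i)
  then obtain s t where st: "s \<in> HomC C (amb C (E # replicate i E)) (copow C E (Suc i))"
    "t \<in> HomC C (copow C E (Suc i)) (amb C (E # replicate i E))"
    "cCmp C t s = cId C (amb C (E # replicate i E))" by blast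
  have "copmor C s (cId C E) \<in> HomC C (amb C (E # replicate (Suc i) E)) (copow C E (Suc (Suc i)))"
    using copmor(1)[OF st(1) id_Hom[OF E]] by (simp add: amb_rep)
  moreover have "copmor C t (cId C E) \<in> HomC C (copow C E (Suc (Suc i))) (amb C (E # replicate (Suc i) E))"
    using copmor(1)[OF st(2) id_Hom[OF E]] by (simp add: amb_rep)
  moreover have "cCmp C (copmor C t (cId C E)) (copmor C s (cId C E)) = cId C (amb C (E # replicate (Suc i) E))"
    using copmor_comp[OF st(1) st(2) id_Hom[OF E] id_Hom[OF E], symmetric] st(3) id_l[OF id_Hom[OF E]]
      copmor_id[OF A_ob E] by (simp add: amb_rep)
  ultimately show ?case by blast
qed

lemma iso_A: "phi (copow C E (Suc i)) \<in> iso (Fo (copow C E (Suc i))) (Go (copow C E (Suc i)))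
   \<Longrightarrow> phi (amb C (E # replicate i E)) \<in> iso (Fo (amb C (E # replicate i E))) (Go (amb C (E # replicate i E)))"
  using retrA[of i] retract_iso[OF F G phi] by blast

lemma down: "phi (copow C E (k + d)) \<in> iso (Fo (copow C E (k + d))) (Go (copow C E (k + d)))
   \<Longrightarrow> phi (copow C E k) \<in> iso (Fo (copow C E k)) (Go (copow C E k))"
proof (induction d)
  case 0 then show ?case by simp
next
  case (Suc d)
  have "phi (copow C E (k + d)) \<in> iso (Fo (copow C E (k + d))) (Go (copow C E (k + d)))"
    using retract_iso[OF F G phi in1[OF copow_ob E] r1(1)[OF copow_ob E] r1(2)[OF copow_ob E]] Suc.prems by simp
  then show ?case using Suc.IH by blast
qed

lemma Lstep: "\<forall>a. (\<forall>i\<le>a + j. phi (amb C (E # replicate i E)) \<in> iso (Fo (amb C (E # replicate i E))) (Go (amb C (E # replicate i E))))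
   \<longrightarrow> ps j (amb C (E # replicate a E)) \<in> iso (fst (KF j) (amb C (E # replicate a E))) (fst (KG j) (amb C (E # replicate a E)))"
proof (induction j)
  case 0
  show ?case by (simp add: amb_one)
next
  case (Suc j)
  show ?case
  proof (intro allI impI)
    fix a assume H: "\<forall>i\<le>a + Suc j. phi (amb C (E # replicate i E)) \<in> iso (Fo (amb C (E # replicate i E))) (Go (amb C (E # replicate i E)))"
    let ?A = "amb C (E # replicate a E)"
    have H1: "\<forall>i\<le>Suc a + j. phi (amb C (E # replicate i E)) \<in> iso (Fo (amb C (E # replicate i E))) (Go (amb C (E # replicate i E)))"
      using H by simp
    have H2: "\<forall>i\<le>a + j. phi (amb C (E # replicate i E)) \<in> iso (Fo (amb C (E # replicate i E))) (Go (amb C (E # replicate i E)))"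
      using H by simp
    have H3: "\<forall>i\<le>0 + j. phi (amb C (E # replicate i E)) \<in> iso (Fo (amb C (E # replicate i E))) (Go (amb C (E # replicate i E)))"
      using H by simp
    have i1: "ps j (amb C (E # replicate (Suc a) E)) \<in> iso (fst (KF j) (amb C (E # replicate (Suc a) E))) (fst (KG j) (amb C (E # replicate (Suc a) E)))"
      by (rule mp[OF spec[OF Suc.IH] H1])
    have i2: "ps j ?A \<in> iso (fst (KF j) ?A) (fst (KG j) ?A)"
      by (rule mp[OF spec[OF Suc.IH] H2])
    have i3: "ps j (amb C (E # replicate 0 E)) \<in> iso (fst (KF j) (amb C (E # replicate 0 E))) (fst (KG j) (amb C (E # replicate 0 E)))"
      by (rule mp[OF spec[OF Suc.IH] H3])
    have i3': "ps j E \<in> iso (fst (KF j) E) (fst (KG j) E)" using i3 by (simp add: amb_one)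
    have "ps j (cCop C ?A E) \<in> iso (cr2o C (fst (KF j)) (snd (KF j)) E ?A) (cr2o C (fst (KG j)) (snd (KG j)) E ?A)"
      apply (rule cr2_restrict_iso[OF KFf(1) KGf(1) NTj A_ob E])
      using i1 apply (simp add: amb_rep)
      using iso_inj[OF i2] apply simp
      using iso_inj[OF i3'] by simp
    then show "ps (Suc j) ?A \<in> iso (fst (KF (Suc j)) ?A) (fst (KG (Suc j)) ?A)"
      by (simp add: amb_cons)
  qed
qed


lemma crni: "cr_nat_iso C Fo Fm Go Gm phi (Suc j) (replicate (Suc j) E) \<longleftrightarrow>
   ps j E \<in> iso (fst (KF j) E) (fst (KG j) E)"
  unfolding cr_nat_iso_def using crK_all[OF F Fred E, where j=j and E=E] crK_all[OF G Gred E, where j=j and E=E] by simp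

lemma trivK: assumes H: "ab_functor C Ho Hm" "reduced C Ho" "polynomial_deg_le C Ho Hm n"
  shows "\<forall>A\<in>cOb C. carrier (fst (Kseq C E Ho Hm n) A) = {\<one>\<^bsub>fst (Kseq C E Ho Hm n) A\<^esub>}"
proof
  fix A assume A: "A \<in> cOb C"
  have "length (A # replicate n E) = Suc n \<and> set (A # replicate n E) \<subseteq> cOb C" using A E by auto
  then have "carrier (fst (cr C Ho Hm (Suc n)) (A # replicate n E)) = {\<one>\<^bsub>fst (cr C Ho Hm (Suc n)) (A # replicate n E)\<^esub>}"
    using H(3) unfolding polynomial_deg_le_def by blast
  then show "carrier (fst (Kseq C E Ho Hm n) A) = {\<one>\<^bsub>fst (Kseq C E Ho Hm n) A\<^esub>}"
    using crK_all[OF H(1,2) A, where j=n and E=E] by simp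
qed

lemma HE: assumes I4: "\<forall>k. 1 \<le> k \<and> k \<le> n \<longrightarrow> cr_nat_iso C Fo Fm Go Gm phi k (replicate k E)"
  shows "ps j E \<in> iso (fst (KF j) E) (fst (KG j) E)"
proof (cases "j < n")
  case True
  then have "1 \<le> Suc j \<and> Suc j \<le> n" by simp
  then have "cr_nat_iso C Fo Fm Go Gm phi (Suc j) (replicate (Suc j) E)" using spec[OF I4, of "Suc j"] by blast
  then show ?thesis using crni[of j] by simp
next
  case False
  then have nj: "n \<le> j" by simp
  have tF: "carrier (fst (KF j) E) = {\<one>\<^bsub>fst (KF j) E\<^esub>}"
    using Kseq_triv[OF F Fred E trivK[OF F Fred Fpol] nj] E by blast
  have tG: "carrier (fst (KG j) E) = {\<one>\<^bsub>fst (KG j) E\<^esub>}"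
    using Kseq_triv[OF G Gred E trivK[OF G Gred Gpol] nj] E by blast
  show ?thesis
    by (rule iso_trivial[OF tF tG NT_hom[OF NTj E]])
      (simp_all add: grp_simps F_grp[OF KFf(1) E] F_grp[OF KGf(1) E])
qed

lemma I4_all: assumes I4: "\<forall>k. 1 \<le> k \<and> k \<le> n \<longrightarrow> cr_nat_iso C Fo Fm Go Gm phi k (replicate k E)"
  shows "\<forall>j. ps j (copow C E m) \<in> iso (fst (KF j) (copow C E m)) (fst (KG j) (copow C E m))"
proof (induction m)
  case 0
  show ?case
  proof
    fix j
    have tF: "carrier (fst (KF j) (copow C E 0)) = {\<one>\<^bsub>fst (KF j) (copow C E 0)\<^esub>}"
      using KFf(2) unfolding reduced_def by simp
    have tG: "carrier (fst (KG j) (copow C E 0)) = {\<one>\<^bsub>fst (KG j) (copow C E 0)\<^esub>}"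
      using KGf(2) unfolding reduced_def by simp
    show "ps j (copow C E 0) \<in> iso (fst (KF j) (copow C E 0)) (fst (KG j) (copow C E 0))"
      by (rule iso_trivial[OF tF tG NT_hom[OF NTj copow_ob]])
        (simp_all add: grp_simps F_grp[OF KFf(1) Z_ob] F_grp[OF KGf(1) Z_ob])
  qed
next
  case (Suc m)
  show ?case
  proof
    fix j
    have R: "ps j (cCop C (copow C E m) E) \<in> iso (cr2o C (fst (KF j)) (snd (KF j)) E (copow C E m))
        (cr2o C (fst (KG j)) (snd (KG j)) E (copow C E m))"
      using spec[OF Suc.IH, of "Suc j"] by (simp add: amb_cons)
    have "ps j (cCop C (copow C E m) E) \<in> iso (fst (KF j) (cCop C (copow C E m) E)) (fst (KG j) (cCop C (copow C E m) E))"
      by (rule cr2_decomp_iso[OF KFf KGf NTj copow_ob E spec[OF Suc.IH] HE[OF I4] R])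
    then show "ps j (copow C E (Suc m)) \<in> iso (fst (KF j) (copow C E (Suc m))) (fst (KG j) (copow C E (Suc m)))"
      by simp
  qed
qed

lemma to1: assumes "\<forall>m. phi (copow C E m) \<in> iso (Fo (copow C E m)) (Go (copow C E m))"
  shows "\<forall>P\<in>cOb C. phi P \<in> iso (Fo P) (Go P)"
proof
  fix P assume P: "P \<in> cOb C"
  obtain k where "is_iso_obj C P (copow C E k)" using gen P by blast
  then obtain f g where fg: "f \<in> HomC C P (copow C E k)" "g \<in> HomC C (copow C E k) P" "cCmp C g f = cId C P"
    unfolding is_iso_obj_def by blast
  show "phi P \<in> iso (Fo P) (Go P)" by (rule retract_iso[OF F G phi fg]) (use assms in blast)
qed

lemma I4_to_I1: "\<forall>k. 1 \<le> k \<and> k \<le> n \<longrightarrow> cr_nat_iso C Fo Fm Go Gm phi k (replicate k E)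
   \<Longrightarrow> \<forall>P\<in>cOb C. phi P \<in> iso (Fo P) (Go P)"
  apply (rule to1)
  apply (rule allI)
  subgoal for m using spec[OF I4_all, of m 0] by (simp add: amb_one)
  done

lemma I2_to_I4: assumes I2: "\<forall>k\<le>n. phi (copow C E k) \<in> iso (Fo (copow C E k)) (Go (copow C E k))"
  shows "\<forall>k. 1 \<le> k \<and> k \<le> n \<longrightarrow> cr_nat_iso C Fo Fm Go Gm phi k (replicate k E)"
proof (intro allI impI)
  fix k assume k: "1 \<le> k \<and> k \<le> n"
  then obtain j where j: "k = Suc j" by (cases k) auto
  have H: "\<forall>i\<le>0 + j. phi (amb C (E # replicate i E)) \<in> iso (Fo (amb C (E # replicate i E))) (Go (amb C (E # replicate i E)))"
  proof (intro allI impI)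
    fix i assume "i \<le> 0 + j"
    then have "Suc i \<le> n" using k j by simp
    then show "phi (amb C (E # replicate i E)) \<in> iso (Fo (amb C (E # replicate i E))) (Go (amb C (E # replicate i E)))"
      using I2 iso_A by blast
  qed
  have "ps j (amb C (E # replicate 0 E)) \<in> iso (fst (KF j) (amb C (E # replicate 0 E))) (fst (KG j) (amb C (E # replicate 0 E)))"
    by (rule mp[OF spec[OF Lstep] H])
  then show "cr_nat_iso C Fo Fm Go Gm phi k (replicate k E)" using crni[of j] j by (simp add: amb_one)
qed

lemma main: "((\<forall>P\<in>cOb C. phi P \<in> iso (Fo P) (Go P))
            \<longleftrightarrow> (\<forall>k\<le>n. phi (copow C E k) \<in> iso (Fo (copow C E k)) (Go (copow C E k))))
       \<and> ((\<forall>P\<in>cOb C. phi P \<in> iso (Fo P) (Go P))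
            \<longleftrightarrow> phi (copow C E n) \<in> iso (Fo (copow C E n)) (Go (copow C E n)))
       \<and> ((\<forall>P\<in>cOb C. phi P \<in> iso (Fo P) (Go P))
            \<longleftrightarrow> (\<forall>k. 1 \<le> k \<and> k \<le> n \<longrightarrow> cr_nat_iso C Fo Fm Go Gm phi k (replicate k E)))"
proof -
  have a: "(\<forall>P\<in>cOb C. phi P \<in> iso (Fo P) (Go P)) \<Longrightarrow> (\<forall>k\<le>n. phi (copow C E k) \<in> iso (Fo (copow C E k)) (Go (copow C E k)))"
    using copow_ob by blast
  have b: "phi (copow C E n) \<in> iso (Fo (copow C E n)) (Go (copow C E n)) \<Longrightarrow>
     (\<forall>k\<le>n. phi (copow C E k) \<in> iso (Fo (copow C E k)) (Go (copow C E k)))"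
    using down by (metis le_add_diff_inverse)
  show ?thesis using a b I2_to_I4 I4_to_I1 copow_ob by blast
qed

end

theorem proposition1p17:
  fixes C :: "('o,'m) pcat" and E :: 'o and n :: nat
    and Fo :: "'o \<Rightarrow> 'g monoid" and Fm :: "'m \<Rightarrow> 'g \<Rightarrow> 'g"
    and Go :: "'o \<Rightarrow> 'h monoid" and Gm :: "'m \<Rightarrow> 'h \<Rightarrow> 'h"
    and phi :: "'o \<Rightarrow> 'g \<Rightarrow> 'h"
  assumes C: "pointed_cat_fin_coprod C"
    and E: "E \<in> cOb C"
    and gen: "\<forall>P\<in>cOb C. \<exists>k. is_iso_obj C P (copow C E k)"
    and F: "ab_functor C Fo Fm" and Fred: "reduced C Fo" and Fpol: "polynomial_deg_le C Fo Fm n"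
    and G: "ab_functor C Go Gm" and Gred: "reduced C Go" and Gpol: "polynomial_deg_le C Go Gm n"
    and phi: "nat_trans C Fo Fm Go Gm phi"
  shows "((\<forall>P\<in>cOb C. phi P \<in> iso (Fo P) (Go P))
            \<longleftrightarrow> (\<forall>k\<le>n. phi (copow C E k) \<in> iso (Fo (copow C E k)) (Go (copow C E k))))
       \<and> ((\<forall>P\<in>cOb C. phi P \<in> iso (Fo P) (Go P))
            \<longleftrightarrow> phi (copow C E n) \<in> iso (Fo (copow C E n)) (Go (copow C E n)))
       \<and> ((\<forall>P\<in>cOb C. phi P \<in> iso (Fo P) (Go P))
            \<longleftrightarrow> (\<forall>k. 1 \<le> k \<and> k \<le> n \<longrightarrow> cr_nat_iso C Fo Fm Go Gm phi k (replicate k E)))"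
  proof -
  interpret prp C E n Fo Fm Go Gm phi
    by (rule prp.intro[OF pc.intro[OF C]]) (simp add: prp_axioms_def E gen F Fred Fpol G Gred Gpol phi)
  show ?thesis by (rule main)
qed

end
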